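(* Disjoint Factors can be solved (statically) in $\mathcal{O}(k2^k+kn)$ time.
   Context: Disjoint Factors: given an integer $k$ and a word $w\in\{1,\ldots,k\}^\star$ of length $n$, decide whether there exist pairwise disjoint (contiguous) subwords $w_1,\ldots,w_k$ of $w$ such that each $w_i$ has length at least $2$ and begins and ends with the symbol $i$. Word-RAM model. *)

theory Defs
  imports Main
begin

definition disjoint_factors :: "nat \<Rightarrow> nat list \<Rightarrow> bool" where
  "disjoint_factors k w \<longleftrightarrow>
     (\<exists>s e :: nat \<Rightarrow> nat.
        (\<forall>i\<in>{1..k}. s i < e i \<and> e i < length w \<and> w ! s i = i \<and> w ! e i = i) \<and>
        (\<forall>i\<in>{1..k}. \<forall>j\<in>{1..k}. i \<noteq> j \<longrightarrow> {s i..e i} \<inter> {s j..e j} = {}))"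

type_synonym reg = nat

datatype instr =
    Const reg nat
  | Add reg reg reg
  | Sub reg reg reg          (* r := a - b (truncated) *)
  | Mul reg reg reg
  | Div reg reg reg
  | Mod reg reg reg
  | AndB reg reg reg
  | OrB reg reg reg
  | XorB reg reg reg
  | Shl reg reg reg
  | Shr reg reg reg
  | Less reg reg reg
  | Load reg reg
  | Store reg reg
  | Jmp nat
  | Jz reg nat
  | Halt

record config =
  pc :: nat
  regs :: "nat \<Rightarrow> nat"
  mem :: "nat \<Rightarrow> nat"

definition halted :: "instr list \<Rightarrow> config \<Rightarrow> bool" where
  "halted P c \<longleftrightarrow> pc c \<ge> length P \<or> P ! pc c = Halt"

fun exec :: "instr \<Rightarrow> config \<Rightarrow> config" where
  "exec (Const r v) c = c\<lparr>pc := Suc (pc c), regs := (regs c)(r := v)\<rparr>"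
| "exec (Add r a b) c = c\<lparr>pc := Suc (pc c), regs := (regs c)(r := regs c a + regs c b)\<rparr>"
| "exec (Sub r a b) c = c\<lparr>pc := Suc (pc c), regs := (regs c)(r := regs c a - regs c b)\<rparr>"
| "exec (Mul r a b) c = c\<lparr>pc := Suc (pc c), regs := (regs c)(r := regs c a * regs c b)\<rparr>"
| "exec (Div r a b) c = c\<lparr>pc := Suc (pc c), regs := (regs c)(r := regs c a div regs c b)\<rparr>"
| "exec (Mod r a b) c = c\<lparr>pc := Suc (pc c), regs := (regs c)(r := regs c a mod regs c b)\<rparr>"
| "exec (AndB r a b) c = c\<lparr>pc := Suc (pc c), regs := (regs c)(r := and (regs c a) (regs c b))\<rparr>"
| "exec (OrB r a b) c = c\<lparr>pc := Suc (pc c), regs := (regs c)(r := or (regs c a) (regs c b))\<rparr>"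
| "exec (XorB r a b) c = c\<lparr>pc := Suc (pc c), regs := (regs c)(r := xor (regs c a) (regs c b))\<rparr>"
| "exec (Shl r a b) c = c\<lparr>pc := Suc (pc c), regs := (regs c)(r := regs c a * 2 ^ regs c b)\<rparr>"
| "exec (Shr r a b) c = c\<lparr>pc := Suc (pc c), regs := (regs c)(r := regs c a div 2 ^ regs c b)\<rparr>"
| "exec (Less r a b) c = c\<lparr>pc := Suc (pc c), regs := (regs c)(r := (if regs c a < regs c b then 1 else 0))\<rparr>"
| "exec (Load r a) c = c\<lparr>pc := Suc (pc c), regs := (regs c)(r := mem c (regs c a))\<rparr>"
| "exec (Store a b) c = c\<lparr>pc := Suc (pc c), mem := (mem c)(regs c a := regs c b)\<rparr>"
| "exec (Jmp l) c = c\<lparr>pc := l\<rparr>"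
| "exec (Jz a l) c = (if regs c a = 0 then c\<lparr>pc := l\<rparr> else c\<lparr>pc := Suc (pc c)\<rparr>)"
| "exec Halt c = c"

definition step :: "instr list \<Rightarrow> config \<Rightarrow> config" where
  "step P c = (if halted P c then c else exec (P ! pc c) c)"

definition run :: "instr list \<Rightarrow> nat \<Rightarrow> config \<Rightarrow> config" where
  "run P t c = (step P ^^ t) c"

text \<open>Input encoding: M[0] = k, M[1] = n = length w, M[2+i] = w!i; all other
memory cells and all registers are 0; execution starts at pc 0.  The answer is
read from register 0 on halting (1 = yes, 0 = no).\<close>

definition init_config :: "nat \<Rightarrow> nat list \<Rightarrow> config" where
  "init_config k w = \<lparr>pc = 0, regs = (\<lambda>_. 0),
     mem = (\<lambda>a. if a = 0 then k else if a = 1 then length w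
                 else if a - 2 < length w then w ! (a - 2) else 0)\<rparr>"

text \<open>Word-size restriction: every value held in a register or memory cell
is below the bound B (i.e. words have log B bits).\<close>

definition values_bounded :: "nat \<Rightarrow> config \<Rightarrow> bool" where
  "values_bounded B c \<longleftrightarrow> (\<forall>r. regs c r < B) \<and> (\<forall>a. mem c a < B)"

end

theory Submission
  imports Defs
begin


definition nxt :: "nat list \<Rightarrow> nat \<Rightarrow> nat \<Rightarrow> nat" where
 "nxt w i q = (if \<exists>j. q \<le> j \<and> j < length w \<and> w!j = i then LEAST j. q \<le> j \<and> j < length w \<and> w!j = i else length w)"

definition Fv :: "nat list \<Rightarrow> nat \<Rightarrow> nat \<Rightarrow> nat" where
 "Fv w i p = nxt w i (nxt w i p + 1) + 1"

definition feas :: "nat list \<Rightarrow> nat set \<Rightarrow> nat \<Rightarrow> bool" where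
 "feas w S q \<longleftrightarrow> (\<exists>s e :: nat \<Rightarrow> nat.
        (\<forall>i\<in>S. s i < e i \<and> e i < q \<and> w ! s i = i \<and> w ! e i = i) \<and>
        (\<forall>i\<in>S. \<forall>j\<in>S. i \<noteq> j \<longrightarrow> {s i..e i} \<inter> {s j..e j} = {}))"

definition optS :: "nat list \<Rightarrow> nat set \<Rightarrow> nat" where
 "optS w S = (LEAST q. q = length w + 1 \<or> (q \<le> length w \<and> feas w S q))"

lemma nxt_le: "nxt w i q \<le> length w"
proof (cases "\<exists>j. q \<le> j \<and> j < length w \<and> w!j = i")
  case True
  then obtain j where j: "q \<le> j \<and> j < length w \<and> w!j = i" by blast
  have "(LEAST j. q \<le> j \<and> j < length w \<and> w!j = i) \<le> j" by (rule Least_le) (use j in auto)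
  then show ?thesis using True j unfolding nxt_def by simp
qed (auto simp add: nxt_def)

lemma nxt_found: "nxt w i q < length w \<Longrightarrow> q \<le> nxt w i q \<and> w ! nxt w i q = i"
proof -
  assume a: "nxt w i q < length w"
  then have ex: "\<exists>j. q \<le> j \<and> j < length w \<and> w!j = i" unfolding nxt_def by (auto split: if_splits)
  from LeastI_ex[OF ex] show ?thesis using ex unfolding nxt_def by simp
qed

lemma nxt_min: "q \<le> j \<Longrightarrow> j < length w \<Longrightarrow> w!j = i \<Longrightarrow> nxt w i q \<le> j"
proof -
  assume j: "q \<le> j" "j < length w" "w!j = i"
  have "(LEAST j. q \<le> j \<and> j < length w \<and> w!j = i) \<le> j" by (rule Least_le) (use j in auto)
  then show ?thesis using j unfolding nxt_def by auto
qed

lemma nxt_end: "length w \<le> q \<Longrightarrow> nxt w i q = length w"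
  unfolding nxt_def by auto

lemma nxt_rec: "q < length w \<Longrightarrow> nxt w i q = (if w!q = i then q else nxt w i (Suc q))"
proof -
  assume q: "q < length w"
  show ?thesis
  proof (cases "w!q = i")
    case True
    then have "nxt w i q \<le> q" using nxt_min[of q q w i] q by simp
    moreover have "nxt w i q < length w" using calculation q by simp
    then have "q \<le> nxt w i q" using nxt_found by blast
    ultimately show ?thesis using True by simp
  next
    case False
    show ?thesis
    proof (cases "nxt w i q < length w")
      case True
      then have A: "q \<le> nxt w i q" "w ! nxt w i q = i" using nxt_found by blast+
      then have B: "Suc q \<le> nxt w i q" using False by (cases "nxt w i q = q") auto
      have "nxt w i (Suc q) \<le> nxt w i q" using nxt_min[OF B True A(2)] .
      moreover have "nxt w i (Suc q) < length w" using calculation True by simp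
      then have "Suc q \<le> nxt w i (Suc q)" "w ! nxt w i (Suc q) = i" using nxt_found by blast+
      then have "nxt w i q \<le> nxt w i (Suc q)" using nxt_min[of q "nxt w i (Suc q)" w i] \<open>nxt w i (Suc q) < length w\<close> by simp
      ultimately show ?thesis using False by simp
    next
      case F2: False
      then have "nxt w i q = length w" using nxt_le[of w i q] by simp
      moreover have "nxt w i (Suc q) = length w"
      proof (rule ccontr)
        assume "nxt w i (Suc q) \<noteq> length w"
        then have "nxt w i (Suc q) < length w" using nxt_le[of w i "Suc q"] by simp
        then have "Suc q \<le> nxt w i (Suc q)" "w ! nxt w i (Suc q) = i" using nxt_found by blast+
        then have "nxt w i q \<le> nxt w i (Suc q)" using nxt_min[of q "nxt w i (Suc q)" w i] \<open>nxt w i (Suc q) < length w\<close> by simp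
        then show False using F2 \<open>nxt w i (Suc q) < length w\<close> by simp
      qed
      ultimately show ?thesis using False by simp
    qed
  qed
qed

lemma F_le: "Fv w i p \<le> length w + 1"
  unfolding Fv_def using nxt_le by (simp add: add_le_mono)

lemma F_sound: "Fv w i p \<le> length w \<Longrightarrow> \<exists>a b. p \<le> a \<and> a < b \<and> b < length w \<and> Suc b = Fv w i p \<and> w!a = i \<and> w!b = i"
proof -
  assume h: "Fv w i p \<le> length w"
  define a where "a = nxt w i p"
  define b where "b = nxt w i (Suc a)"
  have fb: "Fv w i p = Suc b" unfolding Fv_def a_def b_def by simp
  have bn: "b < length w" using h fb by simp
  then have b1: "Suc a \<le> b" "w!b = i" using nxt_found[of w i "Suc a"] unfolding b_def by auto
  have an: "a < length w" using b1 bn by simp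
  then have "p \<le> a" "w!a = i" using nxt_found[of w i p] unfolding a_def by auto
  then show ?thesis using b1 bn fb by (intro exI[of _ a] exI[of _ b]) auto
qed

lemma F_complete: "p \<le> a \<Longrightarrow> a < b \<Longrightarrow> b < length w \<Longrightarrow> w!a = i \<Longrightarrow> w!b = i \<Longrightarrow> Fv w i p \<le> Suc b"
proof -
  assume h: "p \<le> a" "a < b" "b < length w" "w!a = i" "w!b = i"
  have a0: "nxt w i p \<le> a" using nxt_min h by simp
  have "nxt w i (Suc (nxt w i p)) \<le> b" using nxt_min[of "Suc (nxt w i p)" b w i] a0 h by simp
  then show ?thesis unfolding Fv_def by simp
qed

lemma opt_prop: "optS w S = length w + 1 \<or> (optS w S \<le> length w \<and> feas w S (optS w S))"
  unfolding optS_def by (rule LeastI[of _ "length w + 1"]) simp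

lemma opt_le: "optS w S \<le> length w + 1"
  unfolding optS_def by (rule Least_le) simp

lemma opt_feas: "optS w S \<le> length w \<Longrightarrow> feas w S (optS w S)"
  using opt_prop[of w S] by auto

lemma opt_min: "feas w S q \<Longrightarrow> q \<le> length w \<Longrightarrow> optS w S \<le> q"
  unfolding optS_def by (rule Least_le) simp

lemma opt_empty: "optS w {} = 0"
proof -
  have "feas w {} 0" unfolding feas_def by auto
  then show ?thesis using opt_min[of w "{}" 0] by simp
qed


lemma opt_rec:
  assumes fin: "finite S" and ne: "S \<noteq> {}"
  shows "optS w S = Min (insert (length w + 1) ((\<lambda>i. Fv w i (optS w (S - {i}))) ` S))"
proof (rule antisym)
  let ?M = "Min (insert (length w + 1) ((\<lambda>i. Fv w i (optS w (S - {i}))) ` S))"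
  have fM: "finite (insert (length w + 1) ((\<lambda>i. Fv w i (optS w (S - {i}))) ` S))" using fin by simp
  show "?M \<le> optS w S"
  proof (cases "optS w S \<le> length w")
    case False
    then have "optS w S = length w + 1" using opt_le[of w S] by simp
    then show ?thesis using fM by (simp add: Min_le)
  next
    case True
    let ?q = "optS w S"
    obtain s e where se: "\<forall>i\<in>S. s i < e i \<and> e i < ?q \<and> w ! s i = i \<and> w ! e i = i"
       "\<forall>i\<in>S. \<forall>j\<in>S. i \<noteq> j \<longrightarrow> {s i..e i} \<inter> {s j..e j} = {}"
      using opt_feas[OF True] unfolding feas_def by blast
    have "Max (e ` S) \<in> e ` S" using fin ne by simp
    then obtain i where i1: "i \<in> S" "e i = Max (e ` S)" by auto
    have "\<forall>j\<in>S. e j \<le> e i" using fin i1 by simp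
    note i = i1(1) this
    have lt: "e j < s i" if "j \<in> S - {i}" for j
    proof (rule ccontr)
      assume "\<not> e j < s i"
      then have "e j \<in> {s i..e i}" using i that by auto
      moreover have "e j \<in> {s j..e j}" using se(1) that by (auto simp: less_imp_le)
      ultimately show False using se(2) i(1) that by blast
    qed
    have "feas w (S - {i}) (s i)" unfolding feas_def
      using se lt by (intro exI[of _ s] exI[of _ e]) auto
    moreover have "s i \<le> length w" using se(1) i(1) True by (meson le_trans less_imp_le)
    ultimately have o: "optS w (S - {i}) \<le> s i" by (rule opt_min)
    have "Fv w i (optS w (S - {i})) \<le> Suc (e i)"
      by (rule F_complete) (use o se i True in auto)
    also have "\<dots> \<le> ?q" using se(1) i(1) by auto
    finally have "?M \<le> ?q" using fM i(1) by (meson Min_le image_eqI insertI2 order_trans)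
    then show ?thesis .
  qed
  show "optS w S \<le> ?M"
  proof -
    have "optS w S \<le> x" if "x \<in> insert (length w + 1) ((\<lambda>i. Fv w i (optS w (S - {i}))) ` S)" for x
    proof -
      from that consider "x = length w + 1" | i where "i \<in> S" "x = Fv w i (optS w (S - {i}))" by blast
      then show ?thesis
      proof cases
        case 1 then show ?thesis using opt_le by simp
      next
        case 2
        show ?thesis
        proof (cases "x \<le> length w")
          case False then show ?thesis using opt_le[of w S] by simp
        next
          case True
          obtain a b where ab: "optS w (S - {i}) \<le> a" "a < b" "b < length w" "Suc b = x" "w!a = i" "w!b = i"
            using F_sound[of w i "optS w (S - {i})"] True 2 by auto
          have "optS w (S - {i}) \<le> length w" using ab by simp
          then obtain s e where se: "\<forall>j\<in>S-{i}. s j < e j \<and> e j < optS w (S - {i}) \<and> w ! s j = j \<and> w ! e j = j"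
             "\<forall>j\<in>S-{i}. \<forall>j'\<in>S-{i}. j \<noteq> j' \<longrightarrow> {s j..e j} \<inter> {s j'..e j'} = {}"
            using opt_feas unfolding feas_def by blast
          have "feas w S (Suc b)" unfolding feas_def
          proof (rule exI[of _ "s(i:=a)"], rule exI[of _ "e(i:=b)"], rule conjI; intro ballI impI)
            fix j assume "j \<in> S"
            then show "(s(i := a)) j < (e(i := b)) j \<and> (e(i := b)) j < Suc b \<and> w ! (s(i := a)) j = j \<and> w ! (e(i := b)) j = j"
            proof (cases "j = i")
              case True then show ?thesis using ab by simp
            next
              case False then have "j \<in> S - {i}" using \<open>j \<in> S\<close> by simp
              then have "s j < e j \<and> e j < optS w (S - {i}) \<and> w ! s j = j \<and> w ! e j = j" using se(1) by blast
              then show ?thesis using False ab by simp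
            qed
          next
            fix j j' assume jj: "j \<in> S" "j' \<in> S" "j \<noteq> j'"
            show "{(s(i := a)) j..(e(i := b)) j} \<inter> {(s(i := a)) j'..(e(i := b)) j'} = {}"
            proof (cases "j = i")
              case True
              then have "j' \<in> S - {i}" using jj by simp
              then have "e j' < optS w (S - {i})" using se(1) by blast
              then have "e j' < a" using ab(1) by linarith
              then show ?thesis using True jj by auto
            next
              case False
              show ?thesis
              proof (cases "j' = i")
                case True
                then have "j \<in> S - {i}" using jj False by simp
                then have "e j < optS w (S - {i})" using se(1) by blast
              then have "e j < a" using ab(1) by linarith
                then show ?thesis using True jj False by auto
              next
                case False
                then show ?thesis using se(2) jj \<open>j \<noteq> i\<close> by auto
              qed
            qed
          qed
          then show ?thesis using opt_min[of w S "Suc b"] ab by simp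
        qed
      qed
    qed
    then show ?thesis using fM by (simp add: Min_ge_iff)
  qed
qed


lemma unset_sub: assumes b: "bit (S::nat) i" shows "S - 2^i = unset_bit i S" "2^i \<le> S"
proof -
  have "int (unset_bit i S) = unset_bit i (int S)" by (simp add: of_nat_unset_bit_eq)
  also have "\<dots> = int S - 2^i" using b by (simp add: unset_bit_eq bit_of_nat_iff_bit)
  finally have e: "int (unset_bit i S) = int S - 2^i" .
  then show "2^i \<le> S" by (metis of_nat_0_le_iff of_nat_le_iff of_nat_numeral of_nat_power diff_ge_0_iff_ge)
  then show "S - 2^i = unset_bit i S" using e by (metis of_nat_diff of_nat_eq_iff of_nat_numeral of_nat_power)
qed
lemma bit_sub: "bit (S::nat) i \<Longrightarrow> bit (S - 2^i) j \<longleftrightarrow> bit S j \<and> j \<noteq> i"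
  using unset_sub(1) by (simp add: bit_unset_bit_iff) blast
lemma bit_lt: "bit (S::nat) i \<Longrightarrow> S < 2^k \<Longrightarrow> i < k"
  using unset_sub(2) by (metis le_less_trans nat_power_less_imp_less zero_less_numeral)
lemma and1: "and (a::nat) 1 = a mod 2" by (simp add: and_one_eq)
lemma bitdiv: "((S::nat) div 2^j) mod 2 = 0 \<longleftrightarrow> \<not> bit S j" by (simp add: bit_nat_def) presburger

definition symset :: "nat \<Rightarrow> nat set" where "symset m = Suc ` {i. bit m i}"

lemma Min_ins2: "finite A \<Longrightarrow> Min (insert a (insert x A)) = min x (Min (insert a (A::nat set)))"
  by (simp add: insert_commute[of a x])

fun bestf :: "nat list \<Rightarrow> nat \<Rightarrow> nat \<Rightarrow> nat" where
  "bestf w S 0 = Suc (length w)"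
| "bestf w S (Suc j) = (if bit S j then min (bestf w S j) (Fv w (Suc j) (optS w (symset (S - 2^j)))) else bestf w S j)"

lemma bestf_Min: "bestf w S j = Min (insert (Suc (length w)) ((\<lambda>i. Fv w (Suc i) (optS w (symset (S - 2^i)))) ` {i. i<j \<and> bit S i}))"
proof (induction j)
  case 0 then show ?case by simp
next
  case (Suc j)
  show ?case
  proof (cases "bit S j")
    case True
    let ?f = "\<lambda>i. Fv w (Suc i) (optS w (symset (S - 2^i)))"
    have eq: "{i. i < Suc j \<and> bit S i} = insert j {i. i<j \<and> bit S i}" using True by auto
    have "bestf w S (Suc j) = min (?f j) (bestf w S j)" using True by (simp add: min.commute)
    also have "\<dots> = Min (insert (Suc (length w)) (insert (?f j) (?f ` {i. i<j \<and> bit S i})))"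
      unfolding Suc.IH by (rule Min_ins2[symmetric]) simp
    finally show ?thesis unfolding eq image_insert .
  next
    case False
    have "{i. i < Suc j \<and> bit S i} = {i. i<j \<and> bit S i}" using False less_Suc_eq by auto
    then show ?thesis using Suc False by simp
  qed
qed

lemma symset_sub: "bit S i \<Longrightarrow> symset S - {Suc i} = symset (S - 2^i)"
  unfolding symset_def using bit_sub[of S i] by auto

lemma bestf_opt: assumes "0 < S" "S < 2^k" shows "bestf w S k = optS w (symset S)"
proof -
  have I: "{i. i<k \<and> bit S i} = {i. bit S i}" using bit_lt assms(2) by blast
  have "finite {i. i<k \<and> bit S i}" by simp
  then have fin: "finite (symset S)" unfolding symset_def I by simp
  have "\<exists>i. bit S i"
  proof (rule ccontr)
    assume "\<not> (\<exists>i. bit S i)"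
    then have "S = 0" by (intro bit_eqI) simp
    then show False using assms by simp
  qed
  then have ne: "symset S \<noteq> {}" unfolding symset_def by auto
  have "optS w (symset S) = Min (insert (length w + 1) ((\<lambda>i. Fv w i (optS w (symset S - {i}))) ` symset S))"
    by (rule opt_rec[OF fin ne])
  also have "(\<lambda>i. Fv w i (optS w (symset S - {i}))) ` symset S = (\<lambda>i. Fv w (Suc i) (optS w (symset (S - 2^i)))) ` {i. bit S i}"
    unfolding symset_def[of S] image_image
  proof (rule image_cong[OF refl])
    fix i assume "i \<in> {i. bit S i}"
    then show "Fv w (Suc i) (optS w (Suc ` {i. bit S i} - {Suc i})) = Fv w (Suc i) (optS w (symset (S - 2 ^ i)))"
      using symset_sub[of S i] unfolding symset_def by simp
  qed
  finally show ?thesis using bestf_Min[of w S k] I by simp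
qed

lemma symset_0: "symset 0 = {}" unfolding symset_def by simp

lemma symset_full: "symset (2^k - 1) = {1..k}"
proof -
  have m: "(2^k - 1 :: nat) = mask k" by (simp add: mask_eq_exp_minus_1)
  have "{i. bit (2^k - 1 :: nat) i} = {..<k}" unfolding m by (auto simp: bit_mask_iff)
  moreover have "Suc ` {..<k} = {1..k}" by (simp add: lessThan_atLeast0 image_Suc_atLeastLessThan atLeastLessThanSuc_atLeastAtMost)
  ultimately show ?thesis unfolding symset_def by simp
qed

lemma feas_mono: assumes "feas w S q" "q \<le> q'" shows "feas w S q'"
proof -
  obtain s e where se: "\<forall>i\<in>S. s i < e i \<and> e i < q \<and> w ! s i = i \<and> w ! e i = i"
        "\<forall>i\<in>S. \<forall>j\<in>S. i \<noteq> j \<longrightarrow> {s i..e i} \<inter> {s j..e j} = {}"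
    using assms(1) unfolding feas_def by blast
  have "\<forall>i\<in>S. s i < e i \<and> e i < q' \<and> w ! s i = i \<and> w ! e i = i" using se(1) assms(2) by fastforce
  then show ?thesis unfolding feas_def using se(2) by blast
qed

lemma df_feas: "disjoint_factors k w = feas w {1..k} (length w)"
  unfolding disjoint_factors_def feas_def by (rule refl)

lemma df_opt: "disjoint_factors k w \<longleftrightarrow> optS w {1..k} \<le> length w"
  unfolding df_feas using opt_min opt_feas feas_mono by blast



definition prog :: "instr list" where
  "prog = [Load 1 0,
    Const 4 1,
    Load 2 4,
    Const 17 2,
    Add 3 2 17,
    Add 5 1 17,
    Mul 11 5 3,
    Const 5 1,
    Less 9 1 5,
    Jz 9 11,
    Jmp 35,
    Add 10 5 4,
    Mul 7 10 3,
    Add 8 7 2,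
    Store 8 2,
    Add 8 8 4,
    Store 8 2,
    Add 6 2 20,
    Jz 6 33,
    Sub 6 6 4,
    Add 8 6 17,
    Load 9 8,
    Sub 10 9 5,
    Sub 9 5 9,
    Add 9 9 10,
    Add 8 7 6,
    Jz 9 30,
    Add 10 8 4,
    Load 9 10,
    Jmp 31,
    Add 9 6 20,
    Store 8 9,
    Jmp 18,
    Add 5 5 4,
    Jmp 8,
    Store 11 20,
    Shl 13 4 1,
    Const 12 1,
    Less 9 12 13,
    Jz 9 68,
    Add 14 2 4,
    Const 15 0,
    Less 9 15 1,
    Jz 9 64,
    Shr 9 12 15,
    AndB 9 9 4,
    Jz 9 62,
    Shl 16 4 15,
    Sub 10 12 16,
    Add 10 10 11,
    Load 10 10,
    Add 8 15 17,
    Mul 8 8 3,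
    Add 10 8 10,
    Load 10 10,
    Add 10 10 4,
    Add 10 8 10,
    Load 10 10,
    Add 10 10 4,
    Less 9 10 14,
    Jz 9 62,
    Add 14 10 20,
    Add 15 15 4,
    Jmp 42,
    Add 8 11 12,
    Store 8 14,
    Add 12 12 4,
    Jmp 38,
    Sub 10 13 4,
    Add 10 10 11,
    Load 10 10,
    Add 9 2 4,
    Less 0 10 9,
    Halt]"

lemma len_prog: "length prog = 74" by (simp add: prog_def)

lemma prog_nth:
  "prog ! 0 = Load 1 0"
  "prog ! 1 = Const 4 1"
  "prog ! 2 = Load 2 4"
  "prog ! 3 = Const 17 2"
  "prog ! 4 = Add 3 2 17"
  "prog ! 5 = Add 5 1 17"
  "prog ! 6 = Mul 11 5 3"
  "prog ! 7 = Const 5 1"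
  "prog ! 8 = Less 9 1 5"
  "prog ! 9 = Jz 9 11"
  "prog ! 10 = Jmp 35"
  "prog ! 11 = Add 10 5 4"
  "prog ! 12 = Mul 7 10 3"
  "prog ! 13 = Add 8 7 2"
  "prog ! 14 = Store 8 2"
  "prog ! 15 = Add 8 8 4"
  "prog ! 16 = Store 8 2"
  "prog ! 17 = Add 6 2 20"
  "prog ! 18 = Jz 6 33"
  "prog ! 19 = Sub 6 6 4"
  "prog ! 20 = Add 8 6 17"
  "prog ! 21 = Load 9 8"
  "prog ! 22 = Sub 10 9 5"
  "prog ! 23 = Sub 9 5 9"
  "prog ! 24 = Add 9 9 10"
  "prog ! 25 = Add 8 7 6"
  "prog ! 26 = Jz 9 30"
  "prog ! 27 = Add 10 8 4"
  "prog ! 28 = Load 9 10"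
  "prog ! 29 = Jmp 31"
  "prog ! 30 = Add 9 6 20"
  "prog ! 31 = Store 8 9"
  "prog ! 32 = Jmp 18"
  "prog ! 33 = Add 5 5 4"
  "prog ! 34 = Jmp 8"
  "prog ! 35 = Store 11 20"
  "prog ! 36 = Shl 13 4 1"
  "prog ! 37 = Const 12 1"
  "prog ! 38 = Less 9 12 13"
  "prog ! 39 = Jz 9 68"
  "prog ! 40 = Add 14 2 4"
  "prog ! 41 = Const 15 0"
  "prog ! 42 = Less 9 15 1"
  "prog ! 43 = Jz 9 64"
  "prog ! 44 = Shr 9 12 15"
  "prog ! 45 = AndB 9 9 4"
  "prog ! 46 = Jz 9 62"
  "prog ! 47 = Shl 16 4 15"
  "prog ! 48 = Sub 10 12 16"
  "prog ! 49 = Add 10 10 11"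
  "prog ! 50 = Load 10 10"
  "prog ! 51 = Add 8 15 17"
  "prog ! 52 = Mul 8 8 3"
  "prog ! 53 = Add 10 8 10"
  "prog ! 54 = Load 10 10"
  "prog ! 55 = Add 10 10 4"
  "prog ! 56 = Add 10 8 10"
  "prog ! 57 = Load 10 10"
  "prog ! 58 = Add 10 10 4"
  "prog ! 59 = Less 9 10 14"
  "prog ! 60 = Jz 9 62"
  "prog ! 61 = Add 14 10 20"
  "prog ! 62 = Add 15 15 4"
  "prog ! 63 = Jmp 42"
  "prog ! 64 = Add 8 11 12"
  "prog ! 65 = Store 8 14"
  "prog ! 66 = Add 12 12 4"
  "prog ! 67 = Jmp 38"
  "prog ! 68 = Sub 10 13 4"
  "prog ! 69 = Add 10 10 11"
  "prog ! 70 = Load 10 10"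
  "prog ! 71 = Add 9 2 4"
  "prog ! 72 = Less 0 10 9"
  "prog ! 73 = Halt"
  by (simp_all add: prog_def)

lemma prog_nth1: "prog ! Suc 0 = Const 4 1" by (simp add: prog_def)

definition wp :: "nat \<Rightarrow> nat \<Rightarrow> config \<Rightarrow> (config \<Rightarrow> bool) \<Rightarrow> bool" where
  "wp B t c Q \<longleftrightarrow> (\<exists>t'\<le>t. Q (run prog t' c) \<and> (\<forall>j\<le>t'. values_bounded B (run prog j c)))"

lemma run_0: "run P 0 c = c" by (simp add: run_def)
lemma run_Suc: "run P (Suc t) c = run P t (step P c)" unfolding run_def funpow_Suc_right comp_def ..
lemma run_add: "run P (a + b) c = run P b (run P a c)" unfolding run_def add.commute[of a b] funpow_add comp_def ..

lemma wp_done: "(\<forall>r. regs c r < B) \<Longrightarrow> (\<forall>a. mem c a < B) \<Longrightarrow> Q c \<Longrightarrow> wp B t c Q"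
  unfolding wp_def values_bounded_def by (intro exI[of _ 0]) (simp add: run_0)

lemma wp_step:
  assumes "(\<forall>r. regs c r < B)" "(\<forall>a. mem c a < B)" "pc c < length prog" "prog ! pc c \<noteq> Halt" "0 < t"
    "wp B (t - 1) (exec (prog ! pc c) c) Q"
  shows "wp B t c Q"
proof -
  have st: "step prog c = exec (prog ! pc c) c" using assms(3,4) unfolding step_def halted_def by simp
  obtain t' where t': "t' \<le> t - 1" "Q (run prog t' (exec (prog ! pc c) c))"
     "\<forall>j\<le>t'. values_bounded B (run prog j (exec (prog ! pc c) c))"
    using assms(6) unfolding wp_def by blast
  show ?thesis unfolding wp_def
  proof (intro exI[of _ "Suc t'"] conjI allI impI)
    show "Suc t' \<le> t" using t'(1) assms(5) by simp
    show "Q (run prog (Suc t') c)" using t'(2) by (simp add: run_Suc st)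
    fix j assume j: "j \<le> Suc t'"
    show "values_bounded B (run prog j c)"
    proof (cases j)
      case 0 then show ?thesis using assms(1,2) by (simp add: run_0 values_bounded_def)
    next
      case (Suc j') then show ?thesis using t'(3) j by (simp add: run_Suc st)
    qed
  qed
qed

lemma wp_seq: assumes "wp B t1 c (\<lambda>c'. wp B t2 c' Q)" shows "wp B (t1 + t2) c Q"
proof -
  obtain t' where t': "t' \<le> t1" "wp B t2 (run prog t' c) Q" "\<forall>j\<le>t'. values_bounded B (run prog j c)"
    using assms unfolding wp_def by blast
  obtain t'' where t'': "t'' \<le> t2" "Q (run prog t'' (run prog t' c))" "\<forall>j\<le>t''. values_bounded B (run prog j (run prog t' c))"
    using t'(2) unfolding wp_def by blast
  show ?thesis unfolding wp_def
  proof (intro exI[of _ "t' + t''"] conjI allI impI)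
    show "t' + t'' \<le> t1 + t2" using t'(1) t''(1) by simp
    show "Q (run prog (t' + t'') c)" using t''(2) by (simp add: run_add)
    fix j assume j: "j \<le> t' + t''"
    show "values_bounded B (run prog j c)"
    proof (cases "j \<le> t'")
      case True then show ?thesis using t'(3) by simp
    next
      case False
      define d where "d = j - t'"
      have d: "j = t' + d" "d \<le> t''" using j False unfolding d_def by simp_all
      then show ?thesis using t''(3) by (simp add: run_add)
    qed
  qed
qed

lemma wp_mono: assumes "wp B t c Q" "t \<le> t2" "\<And>c. Q c \<Longrightarrow> Q' c" shows "wp B t2 c Q'"
proof -
  obtain t' where "t' \<le> t" "Q (run prog t' c)" "\<forall>j\<le>t'. values_bounded B (run prog j c)"
    using assms(1) unfolding wp_def by blast
  then show ?thesis unfolding wp_def using assms(2,3) by (intro exI[of _ t']) auto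
qed

lemma all_upd_lt: "(\<forall>x. f x < (B::nat)) \<Longrightarrow> (\<forall>x. (f(a := v)) x < B) \<longleftrightarrow> v < B"
proof
  assume "\<forall>x. (f(a := v)) x < B"
  then have "(f(a := v)) a < B" by blast
  then show "v < B" by simp
qed (auto simp: fun_upd_apply)


definition Bnd :: "nat \<Rightarrow> nat list \<Rightarrow> nat" where "Bnd k w = (2 + length w + 2^k)^100"

definition rb :: "nat list \<Rightarrow> nat \<Rightarrow> nat" where "rb w i = (i+1)*(length w+2)"

lemma rbS: "Suc i * Suc (Suc (length w)) = rb w i" unfolding rb_def by simp
lemma rb_Suc: "rb w (Suc i) = rb w i + length w + 2" unfolding rb_def by simp
lemma rb_mono: "i \<le> j \<Longrightarrow> rb w i \<le> rb w j" unfolding rb_def by (intro mult_le_mono1) simp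
lemma rb_ge: "1 \<le> i \<Longrightarrow> length w + 2 \<le> rb w i" unfolding rb_def by simp

lemma Bnd_big: "rb w (Suc (Suc k)) + 2^k < Bnd k w"
proof -
  let ?a = "length w + 2" and ?b = "2^k :: nat"
  have kb: "k + 1 \<le> ?b" by (induction k) auto
  have "(k+3)*?a + ?b \<le> ?a*?a + ?b*?a + ?b" 
  proof -
    have "(k+3)*?a = (k+1)*?a + 2*?a" by algebra
    also have "(k+1)*?a \<le> ?b*?a" using kb by (rule mult_le_mono1)
    also have "2*?a \<le> ?a*?a" by simp
    finally show ?thesis by (simp add: algebra_simps)
  qed
  also have "\<dots> < (?a + ?b)^2"
  proof -
    have "0 < ?a*?b" by simp
    moreover have "?b \<le> ?b*?b" by simp
    ultimately show ?thesis by (simp add: power2_eq_square algebra_simps)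
  qed
  also have "(?a + ?b)^2 \<le> (?a+?b)^100" by (rule power_increasing) simp_all
  finally have "(k+3)*?a + ?b < (?a+?b)^100" .
  moreover have "rb w (Suc (Suc k)) = (k+3)*?a" unfolding rb_def by (simp add: algebra_simps)
  moreover have "Bnd k w = (?a+?b)^100" unfolding Bnd_def by (simp add: add.commute add.left_commute)
  ultimately show ?thesis by simp
qed

lemma Bnd_pos: "0 < Bnd k w" unfolding Bnd_def by simp

definition base :: "nat \<Rightarrow> nat list \<Rightarrow> config \<Rightarrow> bool" where
 "base k w c \<longleftrightarrow> regs c 1 = k \<and> regs c 2 = length w \<and> regs c 3 = length w + 2 \<and> regs c 4 = 1
   \<and> regs c 11 = rb w (Suc k) \<and> regs c 17 = 2 \<and> regs c 20 = 0
   \<and> (\<forall>r. regs c r < Bnd k w) \<and> (\<forall>a. mem c a < Bnd k w)"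

definition inpM :: "nat list \<Rightarrow> (nat \<Rightarrow> nat) \<Rightarrow> bool" where
 "inpM w M \<longleftrightarrow> (\<forall>p < length w. M (Suc (Suc p)) = w ! p)"

definition rowsM :: "nat list \<Rightarrow> (nat \<Rightarrow> nat) \<Rightarrow> nat \<Rightarrow> bool" where
 "rowsM w M i \<longleftrightarrow> (\<forall>i' q. 1 \<le> i' \<longrightarrow> i' < i \<longrightarrow> q \<le> length w + 1 \<longrightarrow> M (rb w i' + q) = nxt w i' q)"

definition curM :: "nat list \<Rightarrow> (nat \<Rightarrow> nat) \<Rightarrow> nat \<Rightarrow> nat \<Rightarrow> bool" where
 "curM w M i m \<longleftrightarrow> (\<forall>q. m \<le> q \<longrightarrow> q \<le> length w + 1 \<longrightarrow> M (rb w i + q) = nxt w i q)"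

lemma inp_upd: "inpM w M \<Longrightarrow> length w + 2 \<le> A \<Longrightarrow> inpM w (M(A := v))"
  unfolding inpM_def by auto

lemma rows_upd: "rowsM w M i \<Longrightarrow> rb w i \<le> A \<Longrightarrow> rowsM w (M(A := v)) i"
  unfolding rowsM_def
proof (intro allI impI)
  fix i' q assume h: "\<forall>i' q. 1 \<le> i' \<longrightarrow> i' < i \<longrightarrow> q \<le> length w + 1 \<longrightarrow> M (rb w i' + q) = nxt w i' q"
    "rb w i \<le> A" "1 \<le> i'" "i' < i" "q \<le> length w + 1"
  have "rb w i' + q < rb w (Suc i')" using h(5) by (simp add: rb_Suc)
  also have "\<dots> \<le> rb w i" using h(4) by (intro rb_mono) simp
  finally have "rb w i' + q \<noteq> A" using h(2) by simp
  then show "(M(A := v)) (rb w i' + q) = nxt w i' q" using h by simp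
qed

lemma cur_upd: "curM w M i (Suc m) \<Longrightarrow> v = nxt w i m \<Longrightarrow> curM w (M(rb w i + m := v)) i m"
  unfolding curM_def by (metis Suc_leI add_left_cancel fun_upd_apply le_neq_implies_less)

lemma rows_next: "rowsM w M i \<Longrightarrow> curM w M i 0 \<Longrightarrow> rowsM w M (Suc i)"
  unfolding rowsM_def curM_def by (metis less_antisym zero_le)

lemma Suc2: "Suc (Suc 0) = 2" by simp

lemma Suc0_mult: "Suc 0 * x = x" by simp

lemmas stp = len_prog prog_nth prog_nth1 Suc2 all_upd_lt rbS Suc0_mult



lemma Bnd_rb: "rb w (Suc k) + length w + 2 + 2^k < Bnd k w"
  using Bnd_big[of w k] by (simp add: rb_Suc)

lemma k_lt_Bnd: "Suc (Suc k) < Bnd k w"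
proof -
  have "k < 2^k" by simp
  then show ?thesis using Bnd_rb[of w k] by linarith
qed

definition I1 :: "nat \<Rightarrow> nat list \<Rightarrow> config \<Rightarrow> nat \<Rightarrow> bool" where
 "I1 k w c i \<longleftrightarrow> pc c = 8 \<and> base k w c \<and> inpM w (mem c) \<and> regs c 5 = i \<and> 1 \<le> i \<and> i \<le> Suc k \<and> rowsM w (mem c) i"

definition I1' :: "nat \<Rightarrow> nat list \<Rightarrow> config \<Rightarrow> nat \<Rightarrow> nat \<Rightarrow> bool" where
 "I1' k w c i m \<longleftrightarrow> pc c = 18 \<and> base k w c \<and> inpM w (mem c) \<and> regs c 5 = i \<and> 1 \<le> i \<and> i \<le> k
   \<and> regs c 7 = rb w i \<and> regs c 6 = m \<and> m \<le> length w \<and> rowsM w (mem c) i \<and> curM w (mem c) i m"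

lemma seg0:
  assumes "set w \<subseteq> {1..k}"
  shows "wp (Bnd k w) 8 (init_config k w) (\<lambda>c. I1 k w c 1)"
proof -
  have wle: "\<forall>p<length w. w ! p \<le> k" using assms by (meson atLeastAtMost_iff nth_mem subset_iff)
  have m0: "\<forall>a. mem (init_config k w) a < Bnd k w" using k_lt_Bnd[of k w] Bnd_rb[of w k] wle unfolding init_config_def by (auto intro: le_less_trans)
  have i1: "pc (init_config k w) = 0" "regs (init_config k w) = (\<lambda>_. 0)" "mem (init_config k w) 0 = k"
     "mem (init_config k w) (Suc 0) = length w" "inpM w (mem (init_config k w))"
    unfolding init_config_def inpM_def by simp_all
  show ?thesis
  apply (insert Bnd_rb[of w k] k_lt_Bnd[of k w] Bnd_pos[of k w])
  apply (rule wp_step, simp_all add: m0 i1 stp del: mult_Suc mult_Suc_right)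
  apply (rule wp_step, simp_all add: m0 i1 stp del: mult_Suc mult_Suc_right)
  apply (rule wp_step, simp_all add: m0 i1 stp del: mult_Suc mult_Suc_right)
  apply (rule wp_step, simp_all add: m0 i1 stp del: mult_Suc mult_Suc_right)
  apply (rule wp_step, simp_all add: m0 i1 stp del: mult_Suc mult_Suc_right)
  apply (rule wp_step, simp_all add: m0 i1 stp del: mult_Suc mult_Suc_right)
  apply (rule wp_step, simp_all add: m0 i1 stp del: mult_Suc mult_Suc_right)
  apply (rule wp_step, simp_all add: m0 i1 stp del: mult_Suc mult_Suc_right)
  apply (rule wp_done)
    apply (simp_all add: I1_def base_def m0 i1 all_upd_lt rowsM_def del: mult_Suc mult_Suc_right)
  done
qed

lemma body1:
  assumes "I1' k w c i (Suc m)"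
  shows "wp (Bnd k w) 14 c (\<lambda>c'. I1' k w c' i m)"
proof -
  note h = assms[unfolded I1'_def base_def]
  have mn: "m < length w" using h by simp
  have wm: "mem c (Suc (Suc m)) = w ! m" using h mn unfolding inpM_def by simp
  have r1: "rb w i + length w + 2 \<le> rb w (Suc k)" using h rb_mono[of "Suc i" "Suc k" w] by (simp add: rb_Suc)
  have r2: "length w + 2 \<le> rb w i" using h rb_ge by simp
  have nx: "nxt w i m = (if w!m = i then m else nxt w i (Suc m))" using nxt_rec mn by simp
  have "curM w (mem c) i (Suc m)" using h by simp
  then have cm: "mem c (rb w i + Suc m) = nxt w i (Suc m)" using mn unfolding curM_def by (auto simp del: add_Suc_right)
  have nle: "nxt w i (Suc m) \<le> length w" by (rule nxt_le)
  have wmB: "w ! m < Bnd k w" using h wm by metis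
  have iB: "i < Bnd k w" using h k_lt_Bnd[of k w] by linarith
  have dB: "w ! m - i < Bnd k w" "i - w ! m < Bnd k w" "i - w ! m + (w ! m - i) < Bnd k w" using wmB iB by arith+
  show ?thesis
  proof (cases "w ! m = i")
    case True
    then have nx': "nxt w i m = m" using nx by simp
    show ?thesis
      apply (insert h wm r1 r2 nx' cm nle True Bnd_rb[of w k] k_lt_Bnd[of k w] mn)
  apply (rule wp_step, simp_all add: stp del: mult_Suc mult_Suc_right)
  apply (rule wp_step, simp_all add: stp del: mult_Suc mult_Suc_right)
  apply (rule wp_step, simp_all add: stp del: mult_Suc mult_Suc_right)
  apply (rule wp_step, simp_all add: stp del: mult_Suc mult_Suc_right)
  apply (rule wp_step, simp_all add: stp del: mult_Suc mult_Suc_right)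
  apply (rule wp_step, simp_all add: stp del: mult_Suc mult_Suc_right)
  apply (rule wp_step, simp_all add: stp del: mult_Suc mult_Suc_right)
  apply (rule wp_step, simp_all add: stp del: mult_Suc mult_Suc_right)
  apply (rule wp_step, simp_all add: stp del: mult_Suc mult_Suc_right)
  apply (rule wp_step, simp_all add: stp del: mult_Suc mult_Suc_right)
  apply (rule wp_step, simp_all add: stp del: mult_Suc mult_Suc_right)
  apply (rule wp_step, simp_all add: stp del: mult_Suc mult_Suc_right)
  apply (rule wp_done)
  apply (simp_all add: I1'_def base_def all_upd_lt inp_upd rows_upd cur_upd del: mult_Suc mult_Suc_right)
  done
  next
    case False
    then have nx': "nxt w i m = nxt w i (Suc m)" using nx by simp
    obtain d where ne: "i - w ! m + (w ! m - i) = Suc d" using False by (metis add_is_0 diff_is_0_eq le_antisym not0_implies_Suc)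
    show ?thesis
      apply (insert h wm wmB dB r1 r2 nx' cm nle False ne Bnd_rb[of w k] k_lt_Bnd[of k w] mn)
  apply (rule wp_step, simp_all add: stp del: mult_Suc mult_Suc_right)
  apply (rule wp_step, simp_all add: stp del: mult_Suc mult_Suc_right)
  apply (rule wp_step, simp_all add: stp del: mult_Suc mult_Suc_right)
  apply (rule wp_step, simp_all add: stp del: mult_Suc mult_Suc_right)
  apply (rule wp_step, simp_all add: stp del: mult_Suc mult_Suc_right)
  apply (rule wp_step, simp_all add: stp del: mult_Suc mult_Suc_right)
  apply (rule wp_step, simp_all add: stp del: mult_Suc mult_Suc_right)
  apply (rule wp_step, simp_all add: stp del: mult_Suc mult_Suc_right)
  apply (rule wp_step, simp_all add: stp del: mult_Suc mult_Suc_right)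
  apply (rule wp_step, simp_all add: stp del: mult_Suc mult_Suc_right)
  apply (rule wp_step, simp_all add: stp del: mult_Suc mult_Suc_right)
  apply (rule wp_step, simp_all add: stp del: mult_Suc mult_Suc_right)
  apply (rule wp_step, simp_all add: stp del: mult_Suc mult_Suc_right)
  apply (rule wp_step, simp_all add: stp del: mult_Suc mult_Suc_right)
  apply (rule wp_done)
  apply (simp_all add: I1'_def base_def all_upd_lt inp_upd rows_upd cur_upd del: mult_Suc mult_Suc_right)
  done
  qed
qed


lemma loop1: "I1' k w c i m \<Longrightarrow> wp (Bnd k w) (14*m + 3) c (\<lambda>c'. I1 k w c' (Suc i))"
proof (induction m arbitrary: c)
  case 0
  note h = 0[unfolded I1'_def base_def]
  have rn: "rowsM w (mem c) (Suc i)" using h rows_next by blast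
  have iB: "Suc i < Bnd k w" using h k_lt_Bnd[of k w] by linarith
  show ?case
    apply (insert h rn iB)
  apply (rule wp_step, simp_all add: stp del: mult_Suc mult_Suc_right)
  apply (rule wp_step, simp_all add: stp del: mult_Suc mult_Suc_right)
  apply (rule wp_step, simp_all add: stp del: mult_Suc mult_Suc_right)
  apply (rule wp_done)
  apply (simp_all add: I1_def base_def all_upd_lt del: mult_Suc mult_Suc_right)
  done
next
  case (Suc m)
  have "wp (Bnd k w) 14 c (\<lambda>c'. wp (Bnd k w) (14*m+3) c' (\<lambda>c'. I1 k w c' (Suc i)))"
    by (rule wp_mono[OF body1[OF Suc.prems]]) (simp_all add: Suc.IH)
  then have "wp (Bnd k w) (14 + (14*m+3)) c (\<lambda>c'. I1 k w c' (Suc i))" by (rule wp_seq)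
  then show ?case by (rule wp_mono) simp_all
qed

lemma cur_init: "curM w ((M)(rb w i + length w := length w, Suc (rb w i + length w) := length w)) i (length w)"
  unfolding curM_def
proof (intro allI impI)
  fix q assume q: "length w \<le> q" "q \<le> length w + 1"
  then consider "q = length w" | "q = Suc (length w)" by linarith
  then show "(M(rb w i + length w := length w, Suc (rb w i + length w) := length w)) (rb w i + q) = nxt w i q"
    by cases (simp_all add: nxt_end)
qed

lemma obody1:
  assumes "I1 k w c i" "i \<le> k"
  shows "wp (Bnd k w) 9 c (\<lambda>c'. I1' k w c' i (length w))"
proof -
  note h = assms(1)[unfolded I1_def base_def]
  have r1: "rb w i + length w + 2 \<le> rb w (Suc k)" using h assms(2) rb_mono[of "Suc i" "Suc k" w] by (simp add: rb_Suc)
  have r2: "length w + 2 \<le> rb w i" using h rb_ge by simp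
  have iB: "Suc i < Bnd k w" using assms(2) k_lt_Bnd[of k w] by linarith
  have ci: "curM w ((mem c)(rb w i + length w := length w, Suc (rb w i + length w) := length w)) i (length w)"
    by (rule cur_init)
  show ?thesis
    apply (insert h assms(2) r1 r2 iB ci Bnd_rb[of w k])
  apply (rule wp_step, simp_all add: stp del: mult_Suc mult_Suc_right)
  apply (rule wp_step, simp_all add: stp del: mult_Suc mult_Suc_right)
  apply (rule wp_step, simp_all add: stp del: mult_Suc mult_Suc_right)
  apply (rule wp_step, simp_all add: stp del: mult_Suc mult_Suc_right)
  apply (rule wp_step, simp_all add: stp del: mult_Suc mult_Suc_right)
  apply (rule wp_step, simp_all add: stp del: mult_Suc mult_Suc_right)
  apply (rule wp_step, simp_all add: stp del: mult_Suc mult_Suc_right)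
  apply (rule wp_step, simp_all add: stp del: mult_Suc mult_Suc_right)
  apply (rule wp_step, simp_all add: stp del: mult_Suc mult_Suc_right)
  apply (rule wp_done)
  apply (simp_all add: I1'_def base_def all_upd_lt inp_upd rows_upd del: mult_Suc mult_Suc_right)
  done
qed

definition P2 :: "nat \<Rightarrow> nat list \<Rightarrow> config \<Rightarrow> bool" where
  "P2 k w c \<longleftrightarrow> pc c = 35 \<and> base k w c \<and> rowsM w (mem c) (Suc k)"

lemma oexit1:
  assumes "I1 k w c (Suc k)"
  shows "wp (Bnd k w) 3 c (P2 k w)"
proof -
  note h = assms(1)[unfolded I1_def base_def]
  show ?thesis
    apply (insert h k_lt_Bnd[of k w])
  apply (rule wp_step, simp_all add: stp del: mult_Suc mult_Suc_right)
  apply (rule wp_step, simp_all add: stp del: mult_Suc mult_Suc_right)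
  apply (rule wp_step, simp_all add: stp del: mult_Suc mult_Suc_right)
  apply (rule wp_done)
  apply (simp_all add: P2_def base_def all_upd_lt del: mult_Suc mult_Suc_right)
  done
qed

lemma oloop1: "I1 k w c i \<Longrightarrow> wp (Bnd k w) ((14 * length w + 12) * (Suc k - i) + 3) c (P2 k w)"
proof (induction "Suc k - i" arbitrary: c i)
  case 0
  then have "i = Suc k" unfolding I1_def by simp
  then show ?case using oexit1 0 by simp
next
  case (Suc d)
  then have ik: "i \<le> k" unfolding I1_def by simp
  have dd: "d = Suc k - Suc i" using Suc.hyps(2) by simp
  have IH: "wp (Bnd k w) ((14 * length w + 12) * d + 3) c (P2 k w)" if "I1 k w c (Suc i)" for c
    using Suc.hyps(1)[OF dd that] dd by simp
  have "wp (Bnd k w) 9 c (\<lambda>c'. wp (Bnd k w) (14 * length w + 3) c' (\<lambda>c'. wp (Bnd k w) ((14 * length w + 12) * d + 3) c' (P2 k w)))"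
    by (rule wp_mono[OF obody1[OF Suc.prems ik]]) (simp_all add: loop1[THEN wp_mono] IH)
  then have "wp (Bnd k w) (9 + (14 * length w + 3)) c (\<lambda>c'. wp (Bnd k w) ((14 * length w + 12) * d + 3) c' (P2 k w))"
    by (rule wp_seq)
  then have "wp (Bnd k w) (9 + (14 * length w + 3) + ((14 * length w + 12) * d + 3)) c (P2 k w)"
    by (rule wp_seq)
  then show ?case by (rule wp_mono) (simp_all flip: Suc.hyps(2))
qed


definition DM :: "nat list \<Rightarrow> nat \<Rightarrow> (nat \<Rightarrow> nat) \<Rightarrow> nat \<Rightarrow> bool" where
  "DM w k M S \<longleftrightarrow> (\<forall>m < S. M (rb w (Suc k) + m) = optS w (symset m))"

definition I2 :: "nat \<Rightarrow> nat list \<Rightarrow> config \<Rightarrow> nat \<Rightarrow> bool" where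
  "I2 k w c S \<longleftrightarrow> pc c = 38 \<and> base k w c \<and> rowsM w (mem c) (Suc k) \<and> regs c 13 = 2^k \<and> regs c 12 = S
     \<and> 1 \<le> S \<and> S \<le> 2^k \<and> DM w k (mem c) S"

definition I2' :: "nat \<Rightarrow> nat list \<Rightarrow> config \<Rightarrow> nat \<Rightarrow> nat \<Rightarrow> bool" where
  "I2' k w c S j \<longleftrightarrow> pc c = 42 \<and> base k w c \<and> rowsM w (mem c) (Suc k) \<and> regs c 13 = 2^k \<and> regs c 12 = S
     \<and> 1 \<le> S \<and> S < 2^k \<and> DM w k (mem c) S \<and> regs c 15 = j \<and> j \<le> k \<and> regs c 14 = bestf w S j"

lemma DM_1: "DM w k (M(rb w (Suc k) := 0)) 1"
  unfolding DM_def by (simp add: symset_0 opt_empty)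

lemma DM_upd: "DM w k M S \<Longrightarrow> v = optS w (symset S) \<Longrightarrow> DM w k (M(rb w (Suc k) + S := v)) (Suc S)"
  unfolding DM_def by (simp add: less_Suc_eq)

lemma pkB: "2^k < Bnd k w" using Bnd_rb[of w k] by linarith

lemma seg2:
  assumes "P2 k w c"
  shows "wp (Bnd k w) 3 c (\<lambda>c'. I2 k w c' 1)"
proof -
  note h = assms(1)[unfolded P2_def base_def]
  have d1: "DM w k ((mem c)(rb w (Suc k) := 0)) 1" by (rule DM_1)
  show ?thesis
    apply (insert h k_lt_Bnd[of k w] pkB[of k w] d1)
  apply (rule wp_step, simp_all add: stp del: mult_Suc mult_Suc_right)
  apply (rule wp_step, simp_all add: stp del: mult_Suc mult_Suc_right)
  apply (rule wp_step, simp_all add: stp del: mult_Suc mult_Suc_right)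
  apply (rule wp_done)
  apply (simp_all add: I2_def base_def all_upd_lt rows_upd del: mult_Suc mult_Suc_right)
  done
qed

lemma dpobody:
  assumes "I2 k w c S" "S < 2^k"
  shows "wp (Bnd k w) 4 c (\<lambda>c'. I2' k w c' S 0)"
proof -
  note h = assms(1)[unfolded I2_def base_def]
  have nB: "Suc (length w) < Bnd k w" using Bnd_rb[of w k] rb_ge[of "Suc k" w] by linarith
  show ?thesis
    apply (insert h assms(2) k_lt_Bnd[of k w] nB)
  apply (rule wp_step, simp_all add: stp del: mult_Suc mult_Suc_right)
  apply (rule wp_step, simp_all add: stp del: mult_Suc mult_Suc_right)
  apply (rule wp_step, simp_all add: stp del: mult_Suc mult_Suc_right)
  apply (rule wp_step, simp_all add: stp del: mult_Suc mult_Suc_right)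
  apply (rule wp_done)
  apply (simp_all add: I2'_def base_def all_upd_lt del: mult_Suc mult_Suc_right)
  done
qed

lemma dpiexit:
  assumes "I2' k w c S k"
  shows "wp (Bnd k w) 6 c (\<lambda>c'. I2 k w c' (Suc S))"
proof -
  note h = assms(1)[unfolded I2'_def base_def]
  have bo: "bestf w S k = optS w (symset S)" using h bestf_opt by simp
  have dm: "DM w k ((mem c)(rb w (Suc k) + S := bestf w S k)) (Suc S)" using h bo DM_upd by simp
  have aB: "rb w (Suc k) + S < Bnd k w" "Suc S < Bnd k w" using h Bnd_rb[of w k] by linarith+
  have bB: "bestf w S k < Bnd k w" using h by metis
  show ?thesis
    apply (insert h k_lt_Bnd[of k w] dm aB bB)
  apply (rule wp_step, simp_all add: stp del: mult_Suc mult_Suc_right)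
  apply (rule wp_step, simp_all add: stp del: mult_Suc mult_Suc_right)
  apply (rule wp_step, simp_all add: stp del: mult_Suc mult_Suc_right)
  apply (rule wp_step, simp_all add: stp del: mult_Suc mult_Suc_right)
  apply (rule wp_step, simp_all add: stp del: mult_Suc mult_Suc_right)
  apply (rule wp_step, simp_all add: stp del: mult_Suc mult_Suc_right)
  apply (rule wp_done)
  apply (simp_all add: I2_def base_def all_upd_lt rows_upd del: mult_Suc mult_Suc_right)
  done
qed


lemma dpibody:
  assumes "I2' k w c S j" "j < k"
  shows "wp (Bnd k w) 22 c (\<lambda>c'. I2' k w c' S (Suc j))"
proof -
  note h = assms(1)[unfolded I2'_def base_def]
  have sB: "S < Bnd k w" "2^k < Bnd k w" using h pkB[of k w] by linarith+
  have dvB: "S div 2^j < Bnd k w" using sB by (meson div_le_dividend le_less_trans)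
  have jB: "Suc j < Bnd k w" "Suc (Suc j) < Bnd k w" using assms(2) k_lt_Bnd[of k w] by linarith+
  have bB: "bestf w S j < Bnd k w" using h by metis
  show ?thesis
  proof (cases "bit S j")
    case False
    have a0: "and (S div 2 ^ j) (Suc 0) = 0" using False and1[of "S div 2^j"] bitdiv[of S j] by simp
    have bs: "bestf w S (Suc j) = bestf w S j" using False by simp
    show ?thesis
      apply (insert h assms(2) sB dvB jB bB a0 bs)
  apply (rule wp_step, simp_all add: stp del: mult_Suc mult_Suc_right)
  apply (rule wp_step, simp_all add: stp del: mult_Suc mult_Suc_right)
  apply (rule wp_step, simp_all add: stp del: mult_Suc mult_Suc_right)
  apply (rule wp_step, simp_all add: stp del: mult_Suc mult_Suc_right)
  apply (rule wp_step, simp_all add: stp del: mult_Suc mult_Suc_right)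
  apply (rule wp_step, simp_all add: stp del: mult_Suc mult_Suc_right)
  apply (rule wp_step, simp_all add: stp del: mult_Suc mult_Suc_right)
  apply (rule wp_done)
  apply (simp_all add: I2'_def base_def all_upd_lt del: mult_Suc mult_Suc_right)
  done
  next
    case True
    have a1: "and (S div 2 ^ j) (Suc 0) = Suc 0" using True and1[of "S div 2^j"] bitdiv[of S j] by simp
    have pj: "2^j \<le> S" using True by (rule unset_sub(2))
    have pos: "0 < (2::nat)^j" by simp
    define p where "p = optS w (symset (S - 2^j))"
    have dm: "DM w k (mem c) S" using h by simp
    have mp: "mem c (S - 2^j + rb w (Suc k)) = p" using dm pj pos unfolding DM_def p_def
      by (metis add.commute diff_less less_le_trans)
    have pl: "p \<le> Suc (length w)" unfolding p_def using opt_le by simp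
    have rows: "rowsM w (mem c) (Suc k)" using h by simp
    define a where "a = nxt w (Suc j) p"
    have ma: "mem c (rb w (Suc j) + p) = a" using rows pl assms(2) unfolding rowsM_def a_def by simp
    have al: "a \<le> length w" unfolding a_def by (rule nxt_le)
    define b where "b = nxt w (Suc j) (Suc a)"
    have rj: "\<forall>q \<le> Suc (length w). mem c (rb w (Suc j) + q) = nxt w (Suc j) q" using rows assms(2) unfolding rowsM_def by simp
    have mb: "mem c (Suc (rb w (Suc j) + a)) = b" using rj[rule_format, of "Suc a"] al unfolding b_def by simp
    have bl: "b \<le> length w" unfolding b_def by (rule nxt_le)
    have fv: "Fv w (Suc j) p = Suc b" unfolding Fv_def a_def b_def by simp
    have bs: "bestf w S (Suc j) = min (bestf w S j) (Suc b)" using True fv unfolding p_def by simp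
    have fv': "Fv w (Suc j) (optS w (symset (S - 2^j))) = Suc b" using fv unfolding p_def .
    note bt = True
    have r1: "rb w (Suc j) + length w + 2 \<le> rb w (Suc k)" using assms(2) rb_mono[of "Suc (Suc j)" "Suc k" w] by (simp add: rb_Suc)
    have vB: "2^j < Bnd k w" "S - 2^j < Bnd k w" "S - 2^j + rb w (Suc k) < Bnd k w" "rb w (Suc j) + p < Bnd k w"
      "rb w (Suc j) < Bnd k w" "Suc a < Bnd k w" "Suc (rb w (Suc j) + a) < Bnd k w" "Suc b < Bnd k w" "p < Bnd k w"
      "a < Bnd k w" "b < Bnd k w"
      using pj sB Bnd_rb[of w k] r1 pl al bl h by linarith+
    show ?thesis
    proof (cases "Suc b < bestf w S j")
      case True
      show ?thesis
      apply (insert h assms(2) sB dvB jB bB a1 bs fv' bt mp ma mb vB True)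
  apply (rule wp_step, simp_all add: stp del: mult_Suc mult_Suc_right)
  apply (rule wp_step, simp_all add: stp del: mult_Suc mult_Suc_right)
  apply (rule wp_step, simp_all add: stp del: mult_Suc mult_Suc_right)
  apply (rule wp_step, simp_all add: stp del: mult_Suc mult_Suc_right)
  apply (rule wp_step, simp_all add: stp del: mult_Suc mult_Suc_right)
  apply (rule wp_step, simp_all add: stp del: mult_Suc mult_Suc_right)
  apply (rule wp_step, simp_all add: stp del: mult_Suc mult_Suc_right)
  apply (rule wp_step, simp_all add: stp del: mult_Suc mult_Suc_right)
  apply (rule wp_step, simp_all add: stp del: mult_Suc mult_Suc_right)
  apply (rule wp_step, simp_all add: stp del: mult_Suc mult_Suc_right)
  apply (rule wp_step, simp_all add: stp del: mult_Suc mult_Suc_right)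
  apply (rule wp_step, simp_all add: stp del: mult_Suc mult_Suc_right)
  apply (rule wp_step, simp_all add: stp del: mult_Suc mult_Suc_right)
  apply (rule wp_step, simp_all add: stp del: mult_Suc mult_Suc_right)
  apply (rule wp_step, simp_all add: stp del: mult_Suc mult_Suc_right)
  apply (rule wp_step, simp_all add: stp del: mult_Suc mult_Suc_right)
  apply (rule wp_step, simp_all add: stp del: mult_Suc mult_Suc_right)
  apply (rule wp_step, simp_all add: stp del: mult_Suc mult_Suc_right)
  apply (rule wp_step, simp_all add: stp del: mult_Suc mult_Suc_right)
  apply (rule wp_step, simp_all add: stp del: mult_Suc mult_Suc_right)
  apply (rule wp_step, simp_all add: stp del: mult_Suc mult_Suc_right)
  apply (rule wp_step, simp_all add: stp del: mult_Suc mult_Suc_right)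
  apply (rule wp_done)
  apply (simp_all add: I2'_def base_def all_upd_lt min_def del: mult_Suc mult_Suc_right)
  done
    next
      case False
      show ?thesis
      apply (insert h assms(2) sB dvB jB bB a1 bs fv' bt mp ma mb vB False)
  apply (rule wp_step, simp_all add: stp del: mult_Suc mult_Suc_right)
  apply (rule wp_step, simp_all add: stp del: mult_Suc mult_Suc_right)
  apply (rule wp_step, simp_all add: stp del: mult_Suc mult_Suc_right)
  apply (rule wp_step, simp_all add: stp del: mult_Suc mult_Suc_right)
  apply (rule wp_step, simp_all add: stp del: mult_Suc mult_Suc_right)
  apply (rule wp_step, simp_all add: stp del: mult_Suc mult_Suc_right)
  apply (rule wp_step, simp_all add: stp del: mult_Suc mult_Suc_right)
  apply (rule wp_step, simp_all add: stp del: mult_Suc mult_Suc_right)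
  apply (rule wp_step, simp_all add: stp del: mult_Suc mult_Suc_right)
  apply (rule wp_step, simp_all add: stp del: mult_Suc mult_Suc_right)
  apply (rule wp_step, simp_all add: stp del: mult_Suc mult_Suc_right)
  apply (rule wp_step, simp_all add: stp del: mult_Suc mult_Suc_right)
  apply (rule wp_step, simp_all add: stp del: mult_Suc mult_Suc_right)
  apply (rule wp_step, simp_all add: stp del: mult_Suc mult_Suc_right)
  apply (rule wp_step, simp_all add: stp del: mult_Suc mult_Suc_right)
  apply (rule wp_step, simp_all add: stp del: mult_Suc mult_Suc_right)
  apply (rule wp_step, simp_all add: stp del: mult_Suc mult_Suc_right)
  apply (rule wp_step, simp_all add: stp del: mult_Suc mult_Suc_right)
  apply (rule wp_step, simp_all add: stp del: mult_Suc mult_Suc_right)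
  apply (rule wp_step, simp_all add: stp del: mult_Suc mult_Suc_right)
  apply (rule wp_step, simp_all add: stp del: mult_Suc mult_Suc_right)
  apply (rule wp_done)
  apply (simp_all add: I2'_def base_def all_upd_lt min_def del: mult_Suc mult_Suc_right)
  done
    qed
  qed
qed

lemma dpexit:
  assumes "I2 k w c S" "\<not> S < 2^k"
  shows "wp (Bnd k w) 7 c (\<lambda>c'. halted prog c' \<and> regs c' 0 = (if disjoint_factors k w then 1 else 0))"
proof -
  note h = assms(1)[unfolded I2_def base_def]
  have S: "S = 2^k" using h assms(2) by simp
  have dm: "DM w k (mem c) S" using h by simp
  have lt: "2^k - 1 < S" using S by simp
  then have "mem c (rb w (Suc k) + (2^k - 1)) = optS w (symset (2^k - 1))" using dm unfolding DM_def by blast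
  then have mo: "mem c (2^k - Suc 0 + rb w (Suc k)) = optS w {1..k}" unfolding symset_full by (simp add: add.commute)
  have df: "disjoint_factors k w \<longleftrightarrow> optS w {1..k} \<le> length w" by (rule df_opt)
  have oB: "optS w {1..k} < Bnd k w" using opt_le[of w "{1..k}"] Bnd_rb[of w k] rb_ge[of "Suc k" w] by linarith
  have vB: "2^k - Suc 0 < Bnd k w" "2^k - Suc 0 + rb w (Suc k) < Bnd k w" "Suc (length w) < Bnd k w"
    using Bnd_rb[of w k] rb_ge[of "Suc k" w] by linarith+
  show ?thesis
  proof (cases "optS w {1..k} \<le> length w")
    case True
    show ?thesis
    apply (insert h S mo df oB vB k_lt_Bnd[of k w] True)
  apply (rule wp_step, simp_all add: stp del: mult_Suc mult_Suc_right)
  apply (rule wp_step, simp_all add: stp del: mult_Suc mult_Suc_right)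
  apply (rule wp_step, simp_all add: stp del: mult_Suc mult_Suc_right)
  apply (rule wp_step, simp_all add: stp del: mult_Suc mult_Suc_right)
  apply (rule wp_step, simp_all add: stp del: mult_Suc mult_Suc_right)
  apply (rule wp_step, simp_all add: stp del: mult_Suc mult_Suc_right)
  apply (rule wp_step, simp_all add: stp del: mult_Suc mult_Suc_right)
  apply (rule wp_done)
  apply (simp_all add: halted_def stp all_upd_lt del: mult_Suc mult_Suc_right)
  done
  next
    case False
    show ?thesis
    apply (insert h S mo df oB vB k_lt_Bnd[of k w] False)
  apply (rule wp_step, simp_all add: stp del: mult_Suc mult_Suc_right)
  apply (rule wp_step, simp_all add: stp del: mult_Suc mult_Suc_right)
  apply (rule wp_step, simp_all add: stp del: mult_Suc mult_Suc_right)
  apply (rule wp_step, simp_all add: stp del: mult_Suc mult_Suc_right)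
  apply (rule wp_step, simp_all add: stp del: mult_Suc mult_Suc_right)
  apply (rule wp_step, simp_all add: stp del: mult_Suc mult_Suc_right)
  apply (rule wp_step, simp_all add: stp del: mult_Suc mult_Suc_right)
  apply (rule wp_done)
  apply (simp_all add: halted_def stp all_upd_lt del: mult_Suc mult_Suc_right)
  done
  qed
qed


lemma dploop_inner: "I2' k w c S j \<Longrightarrow> wp (Bnd k w) (22*(k-j) + 6) c (\<lambda>c'. I2 k w c' (Suc S))"
proof (induction "k - j" arbitrary: c j)
  case 0
  then have "j = k" unfolding I2'_def by simp
  then show ?case using dpiexit 0 by simp
next
  case (Suc d)
  then have jk: "j < k" unfolding I2'_def by simp
  have dd: "d = k - Suc j" using Suc.hyps(2) by simp
  have IH: "wp (Bnd k w) (22*d + 6) c (\<lambda>c'. I2 k w c' (Suc S))" if "I2' k w c S (Suc j)" for c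
    using Suc.hyps(1)[OF dd that] dd by simp
  have "wp (Bnd k w) 22 c (\<lambda>c'. wp (Bnd k w) (22*d + 6) c' (\<lambda>c'. I2 k w c' (Suc S)))"
    by (rule wp_mono[OF dpibody[OF Suc.prems jk]]) (simp_all add: IH)
  then have "wp (Bnd k w) (22 + (22*d + 6)) c (\<lambda>c'. I2 k w c' (Suc S))" by (rule wp_seq)
  then show ?case by (rule wp_mono) (simp_all flip: Suc.hyps(2))
qed

lemma dploop_outer: "I2 k w c S \<Longrightarrow> wp (Bnd k w) ((22*k+10)*(2^k - S) + 7) c
     (\<lambda>c'. halted prog c' \<and> regs c' 0 = (if disjoint_factors k w then 1 else 0))"
proof (induction "2^k - S" arbitrary: c S)
  case 0
  then have "\<not> S < 2^k" by simp
  then show ?case using dpexit[OF 0(2)] by simp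
next
  case (Suc d)
  then have sk: "S < 2^k" by simp
  have dd: "d = 2^k - Suc S" using Suc.hyps(2) by simp
  have IH: "wp (Bnd k w) ((22*k+10)*d + 7) c (\<lambda>c'. halted prog c' \<and> regs c' 0 = (if disjoint_factors k w then 1 else 0))"
    if "I2 k w c (Suc S)" for c
    using Suc.hyps(1)[OF dd that] dd by simp
  have "wp (Bnd k w) 4 c (\<lambda>c'. wp (Bnd k w) (22*(k-0) + 6) c' (\<lambda>c'. wp (Bnd k w) ((22*k+10)*d + 7) c'
     (\<lambda>c'. halted prog c' \<and> regs c' 0 = (if disjoint_factors k w then 1 else 0))))"
    by (rule wp_mono[OF dpobody[OF Suc.prems sk]]) (simp_all add: dploop_inner[THEN wp_mono] IH)
  then have "wp (Bnd k w) (4 + (22*(k-0) + 6)) c (\<lambda>c'. wp (Bnd k w) ((22*k+10)*d + 7) c'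
     (\<lambda>c'. halted prog c' \<and> regs c' 0 = (if disjoint_factors k w then 1 else 0)))"
    by (rule wp_seq)
  then have "wp (Bnd k w) (4 + (22*(k-0) + 6) + ((22*k+10)*d + 7)) c
     (\<lambda>c'. halted prog c' \<and> regs c' 0 = (if disjoint_factors k w then 1 else 0))"
    by (rule wp_seq)
  then show ?case by (rule wp_mono) (simp_all flip: Suc.hyps(2) add: algebra_simps)
qed

lemma total:
  assumes "set w \<subseteq> {1..k}"
  shows "wp (Bnd k w) (8 + ((14 * length w + 12) * k + 3) + 3 + ((22*k+10)*(2^k - 1) + 7)) (init_config k w)
     (\<lambda>c'. halted prog c' \<and> regs c' 0 = (if disjoint_factors k w then 1 else 0))"
proof -
  let ?Q = "\<lambda>c'. halted prog c' \<and> regs c' 0 = (if disjoint_factors k w then 1 else 0)"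
  have o1: "wp (Bnd k w) ((14 * length w + 12) * k + 3) c (P2 k w)" if "I1 k w c 1" for c
    using oloop1[OF that] by simp
  have d1: "wp (Bnd k w) ((22*k+10)*(2^k - 1) + 7) c ?Q" if "I2 k w c 1" for c
    using dploop_outer[OF that] .
  have s2: "wp (Bnd k w) 3 c (\<lambda>c'. wp (Bnd k w) ((22*k+10)*(2^k - 1) + 7) c' ?Q)" if "P2 k w c" for c
    by (rule wp_mono[OF seg2[OF that] order_refl]) (rule d1)
  have s2': "wp (Bnd k w) (3 + ((22*k+10)*(2^k - 1) + 7)) c ?Q" if "P2 k w c" for c
    using wp_seq[OF s2[OF that]] .
  have "wp (Bnd k w) ((14 * length w + 12) * k + 3) c (\<lambda>c'. wp (Bnd k w) (3 + ((22*k+10)*(2^k - 1) + 7)) c' ?Q)" if "I1 k w c 1" for c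
    by (rule wp_mono[OF o1[OF that] order_refl]) (rule s2')
  then have o1': "wp (Bnd k w) ((14 * length w + 12) * k + 3 + (3 + ((22*k+10)*(2^k - 1) + 7))) c ?Q" if "I1 k w c 1" for c
    using wp_seq that by blast
  have "wp (Bnd k w) 8 (init_config k w) (\<lambda>c'. wp (Bnd k w) ((14 * length w + 12) * k + 3 + (3 + ((22*k+10)*(2^k - 1) + 7))) c' ?Q)"
    by (rule wp_mono[OF seg0[OF assms] order_refl]) (rule o1')
  then have "wp (Bnd k w) (8 + ((14 * length w + 12) * k + 3 + (3 + ((22*k+10)*(2^k - 1) + 7)))) (init_config k w) ?Q"
    by (rule wp_seq)
  then show ?thesis by (simp only: add.assoc)
qed

lemma lin_aux: "(X::nat) \<le> 22*Y + 10*E \<Longrightarrow> E \<le> Y + 1 \<Longrightarrow> k \<le> Y \<Longrightarrow> 21 + 14*Z + 12*k + X \<le> 100*(Y+Z) + (100::nat)"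
  by simp

lemma time_bound: "8 + ((14 * n + 12) * k + 3) + 3 + ((22*k+10)*(2^k - 1) + 7) \<le> 100 * (k * 2^k + k * (n::nat)) + 100"
proof -
  have p1: "1 \<le> (2::nat)^k" by simp
  have a: "k \<le> k * 2^k" using p1 by simp
  have b: "2^k \<le> k * 2^k + 1" by (cases k) auto
  have c: "(22*k+10)*(2^k - 1) \<le> 22*(k*2^k) + 10*2^k"
  proof -
    have "(22*k+10)*(2^k - 1) \<le> (22*k+10)*2^k" by simp
    also have "\<dots> = 22*(k*2^k) + 10*2^k" by (simp add: algebra_simps)
    finally show ?thesis .
  qed
  have d: "(14 * n + 12) * k = 14*(k*n) + 12*k" by (simp add: algebra_simps)
  have "8 + ((14 * n + 12) * k + 3) + 3 + ((22*k+10)*(2^k - 1) + 7) = 21 + 14*(k*n) + 12*k + (22*k+10)*(2^k - 1)"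
    using d by simp
  also have "\<dots> \<le> 100 * (k * 2^k + k * n) + 100" by (rule lin_aux[OF c b a])
  finally show ?thesis .
qed

theorem corollary27:
  shows "\<exists>(P :: instr list) (C :: nat).
    \<forall>(k :: nat) (w :: nat list). set w \<subseteq> {1..k} \<longrightarrow>
      (\<exists>t. t \<le> C * (k * 2 ^ k + k * length w) + C \<and>
           halted P (run P t (init_config k w)) \<and>
           regs (run P t (init_config k w)) 0 = (if disjoint_factors k w then 1 else 0) \<and>
           (\<forall>j\<le>t. values_bounded ((2 + length w + 2 ^ k) ^ C) (run P j (init_config k w))))"
proof (rule exI[of _ prog], rule exI[of _ 100], intro allI impI)
  fix k :: nat and w :: "nat list"
  assume a: "set w \<subseteq> {1..k}"
  obtain t where t: "t \<le> 8 + ((14 * length w + 12) * k + 3) + 3 + ((22*k+10)*(2^k - 1) + 7)"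
    "halted prog (run prog t (init_config k w))"
    "regs (run prog t (init_config k w)) 0 = (if disjoint_factors k w then 1 else 0)"
    "\<forall>j\<le>t. values_bounded (Bnd k w) (run prog j (init_config k w))"
    using total[OF a] unfolding wp_def by blast
  show "\<exists>t. t \<le> 100 * (k * 2 ^ k + k * length w) + 100 \<and>
           halted prog (run prog t (init_config k w)) \<and>
           regs (run prog t (init_config k w)) 0 = (if disjoint_factors k w then 1 else 0) \<and>
           (\<forall>j\<le>t. values_bounded ((2 + length w + 2 ^ k) ^ 100) (run prog j (init_config k w)))"
    using t time_bound[of "length w" k] unfolding Bnd_def by (intro exI[of _ t]) auto
qed

end
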